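(* Let $\mathcal{H}\subseteq\mathcal{G}$ be a dense subsemigroup, let $k\ge2$, let $S\subseteq\mathcal{H}$ be strongly $k$-product-free, and let $W\subseteq S$ be a finite subset with unique products in $\mathcal{H}$. Then \[\bar{d}_{\mathcal{H}}(S)\le \frac{1}{1+\frac{\mu(W)}{M}+\cdots+\left(\frac{\mu(W)}{M}\right)^{k-1}}.\]
   Context: $\mathcal{A}$ is a finite alphabet with $|\mathcal{A}|\ge2$, $\mathcal{F}$ the free group over $\mathcal{A}$, elements identified with reduced words, $|w|$ the reduced length. Fix $x,y\in\mathcal{A}\cup\mathcal{A}^{-1}$ with $x\ne y^{-1}$, and let $\mathcal{G}$ be the subsemigroup of $\mathcal{F}$ consisting of reduced words beginning with $x$ and ending with $y$, together with the empty word. $M=\frac{2|\mathcal{A}|}{2|\mathcal{A}|-1}$. The measure $\mu$ on $\mathcal{F}$ is $\mu(\{w\})=\frac{1}{2|\mathcal{A}|(2|\mathcal{A}|-1)^{|w|-1}}$ for nonempty $w$ (each length layer has total weight one), extended additively to sets. For $A\subseteq\mathcal{F}$, $A_{\le n}=\{w\in A:|w|\le n\}$; for $A\subseteq\mathcal{H}$, $\bar{d}_{\mathcal{H}}(A)=\limsup_{n\to\infty}\mu(A_{\le n})/\mu(\mathcal{H}_{\le n})$. $\mathcal{H}$ is dense if there is a fixed $\delta>0$ with $\mu(\mathcal{H}_{\le n})>\delta\mu(\mathcal{F}_{\le n})>0$ for all large $n$; it is a subsemigroup if $\alpha\beta\in\mathcal{H}$ for all $\alpha,\beta\in\mathcal{H}$.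 $W\subseteq\mathcal{H}$ has unique products in $\mathcal{H}$ if the map $W\times\mathcal{H}\to\mathcal{H}$, $(w,h)\mapsto wh$, is injective. A set is strongly $k$-product-free if for every $2\le\ell\le k$ there are no $x_1,\dots,x_\ell,z$ in it with $x_1\cdots x_\ell=z$. *)

theory Defs
  imports "HOL-Analysis.Analysis"
begin

text \<open>Letters of the free group over the finite alphabet 'a: a pair (a, False) stands for
  the generator a, (a, True) for its inverse.  Elements of the free group are reduced words.\<close>

type_synonym 'a letter = "'a \<times> bool"
type_synonym 'a fword = "'a letter list"

definition inv_letter :: "'a letter \<Rightarrow> 'a letter" where
  "inv_letter l = (fst l, \<not> snd l)"

definition reduced :: "'a fword \<Rightarrow> bool" where
  "reduced w \<longleftrightarrow> (\<forall>i. Suc i < length w \<longrightarrow> w ! Suc i \<noteq> inv_letter (w ! i))"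

definition free_group :: "'a fword set" where
  "free_group = {w. reduced w}"

text \<open>Product of reduced words: cancel the end of the first word (given reversed) against
  the start of the second one.\<close>
fun mul_aux :: "'a fword \<Rightarrow> 'a fword \<Rightarrow> 'a fword" where
  "mul_aux [] v = v"
| "mul_aux (x # xs) [] = rev (x # xs)"
| "mul_aux (x # xs) (y # ys) =
     (if y = inv_letter x then mul_aux xs ys else rev (x # xs) @ y # ys)"

definition fmul :: "'a fword \<Rightarrow> 'a fword \<Rightarrow> 'a fword" where
  "fmul u v = mul_aux (rev u) v"

definition fprod :: "'a fword list \<Rightarrow> 'a fword" where
  "fprod xs = foldr fmul xs []"

definition semG :: "'a letter \<Rightarrow> 'a letter \<Rightarrow> 'a fword set" where
  "semG x y = {w. reduced w \<and> (w = [] \<or> (hd w = x \<and> last w = y))}"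

text \<open>The measure: weight 1/(2|A|(2|A|-1)^(|w|-1)) for nonempty w; the empty word gets
  weight 1 (its length layer has total weight one).\<close>
definition mu :: "'a::finite fword \<Rightarrow> real" where
  "mu w = (if w = [] then 1
           else 1 / (2 * real CARD('a) * (2 * real CARD('a) - 1) ^ (length w - 1)))"

definition muS :: "'a::finite fword set \<Rightarrow> real" where
  "muS A = (\<Sum>w\<in>A. mu w)"

definition upto_len :: "'a fword set \<Rightarrow> nat \<Rightarrow> 'a fword set" where
  "upto_len A n = {w \<in> A. length w \<le> n}"

definition Mconst :: "'a::finite itself \<Rightarrow> real" where
  "Mconst _ = 2 * real CARD('a) / (2 * real CARD('a) - 1)"

definition upper_density :: "'a::finite fword set \<Rightarrow> 'a fword set \<Rightarrow> ereal" where
  "upper_density H A =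
     limsup (\<lambda>n. ereal (muS (upto_len A n) / muS (upto_len H n)))"

definition dense_set :: "'a::finite fword set \<Rightarrow> bool" where
  "dense_set H \<longleftrightarrow> (\<exists>\<delta>>0. \<forall>\<^sub>F n in sequentially.
      muS (upto_len H n) > \<delta> * muS (upto_len (free_group :: 'a fword set) n) \<and>
      \<delta> * muS (upto_len (free_group :: 'a fword set) n) > 0)"

definition subsemigroup :: "'a fword set \<Rightarrow> bool" where
  "subsemigroup H \<longleftrightarrow> (\<forall>a\<in>H. \<forall>b\<in>H. fmul a b \<in> H)"

definition unique_products :: "'a fword set \<Rightarrow> 'a fword set \<Rightarrow> bool" where
  "unique_products W H \<longleftrightarrow> inj_on (\<lambda>(w, h). fmul w h) (W \<times> H)"

definition strongly_product_free :: "nat \<Rightarrow> 'a fword set \<Rightarrow> bool" where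
  "strongly_product_free k S \<longleftrightarrow>
     (\<forall>xs z. 2 \<le> length xs \<and> length xs \<le> k \<and> set xs \<subseteq> S \<and> z \<in> S \<longrightarrow> fprod xs \<noteq> z)"

end

theory Submission
  imports Defs
begin

lemma inv_letter_inv[simp]: "inv_letter (inv_letter l) = l"
  by (simp add: inv_letter_def)

lemma mu_nonneg: "mu (w :: 'a::finite fword) \<ge> 0"
proof -
  have "real CARD('a) \<ge> 1" by (simp add: Suc_leI)
  then have "2 * real CARD('a) - 1 \<ge> 0" "2 * real CARD('a) \<ge> 0" by linarith+
  then show ?thesis unfolding mu_def by (auto intro!: divide_nonneg_nonneg mult_nonneg_nonneg zero_le_power)
qed

lemma fmul_Nil[simp]: "fmul u [] = u"
  by (cases "rev u") (auto simp: fmul_def)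

lemma fmul_app:
  assumes "u \<noteq> []" "v \<noteq> []" "hd v \<noteq> inv_letter (last u)"
  shows "fmul u v = u @ v"
proof -
  obtain a r where r: "rev u = a # r" using assms(1) by (cases "rev u") auto
  obtain b s where s: "v = b # s" using assms(2) by (cases v) auto
  have u: "u = rev (a # r)" using r by (metis rev_rev_ident)
  have "last u = a" using u by simp
  then have "b \<noteq> inv_letter a" using assms(3) s by simp
  then show ?thesis using s u by (simp add: fmul_def)
qed

lemma mu_app:
  assumes "u \<noteq> []" "v \<noteq> []"
  shows "mu (u @ v :: 'a::finite fword) = Mconst TYPE('a) * mu u * mu v"
proof -
  define A where "A = real CARD('a)"
  have A1: "A \<ge> 1" unfolding A_def by (simp add: Suc_leI)
  define q where "q = 2 * A - 1"
  have q: "q > 0" using A1 unfolding q_def by simp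
  define a where "a = length u - 1"
  define b where "b = length v - 1"
  have lu: "length u = Suc a" using assms(1) a_def by (cases u) auto
  have lv: "length v = Suc b" using assms(2) b_def by (cases v) auto
  have luv: "length (u @ v) - 1 = Suc (a + b)" using lu lv by simp
  have e1: "mu (u @ v) = 1 / (2 * A * q ^ Suc (a + b))"
    using assms unfolding mu_def A_def[symmetric] q_def[symmetric] luv by simp
  have e2: "mu u = 1 / (2 * A * q ^ a)"
    using assms unfolding mu_def A_def[symmetric] q_def[symmetric] a_def by simp
  have e3: "mu v = 1 / (2 * A * q ^ b)"
    using assms unfolding mu_def A_def[symmetric] q_def[symmetric] b_def by simp
  have e4: "Mconst TYPE('a) = 2 * A / q" unfolding Mconst_def A_def q_def by simp
  have "q ^ Suc (a + b) = q * q ^ a * q ^ b" by (simp add: power_add)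
  then show ?thesis unfolding e1 e2 e3 e4 using q A1 by (simp add: divide_simps)
qed

lemma reduced_snoc:
  "reduced (w @ [l]) \<longleftrightarrow> reduced w \<and> (w = [] \<or> l \<noteq> inv_letter (last w))"
proof (cases "w = []")
  case True then show ?thesis by (simp add: reduced_def)
next
  case False
  show ?thesis
  proof
    assume R: "reduced (w @ [l])"
    have "reduced w" unfolding reduced_def
    proof (intro allI impI)
      fix i assume "Suc i < length w"
      then show "w ! Suc i \<noteq> inv_letter (w ! i)"
        using R[unfolded reduced_def, rule_format, of i] by (simp add: nth_append)
    qed
    moreover have "l \<noteq> inv_letter (last w)"
      using R[unfolded reduced_def, rule_format, of "length w - 1"] False
      by (simp add: nth_append last_conv_nth)
    ultimately show "reduced w \<and> (w = [] \<or> l \<noteq> inv_letter (last w))" by simp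
  next
    assume R: "reduced w \<and> (w = [] \<or> l \<noteq> inv_letter (last w))"
    show "reduced (w @ [l])" unfolding reduced_def
    proof (intro allI impI)
      fix i assume i: "Suc i < length (w @ [l])"
      show "(w @ [l]) ! Suc i \<noteq> inv_letter ((w @ [l]) ! i)"
      proof (cases "Suc i < length w")
        case True then show ?thesis using R unfolding reduced_def by (simp add: nth_append)
      next
        case F: False
        then have "Suc i = length w" using i by simp
        then have "i = length w - 1" by simp
        then show ?thesis using R False \<open>Suc i = length w\<close> by (simp add: nth_append last_conv_nth)
      qed
    qed
  qed
qed

definition layer :: "nat \<Rightarrow> 'a fword set" where
  "layer j = {w. reduced w \<and> length w = j}"

lemma finite_layer: "finite (layer j :: 'a::finite fword set)"
proof -
  have "layer j \<subseteq> {xs. set xs \<subseteq> (UNIV :: 'a letter set) \<and> length xs = j}"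
    unfolding layer_def by auto
  then show ?thesis using finite_subset finite_lists_length_eq[of "UNIV :: 'a letter set" j] by auto
qed

lemma layer_Suc_Suc:
  "layer (Suc (Suc j)) = (\<lambda>(w, l). w @ [l]) ` (SIGMA w:layer (Suc j). UNIV - {inv_letter (last w)})"
proof (intro set_eqI iffI)
  fix v :: "'a fword" assume v: "v \<in> layer (Suc (Suc j))"
  define w where "w = butlast v"
  define l where "l = last v"
  have vne: "v \<noteq> []" using v by (auto simp: layer_def)
  have wl: "v = w @ [l]" unfolding w_def l_def using vne by simp
  have lw: "length w = Suc j" using v unfolding w_def layer_def by simp
  then have wne: "w \<noteq> []" by auto
  have R: "reduced w \<and> l \<noteq> inv_letter (last w)"
    using v wl wne reduced_snoc[of w l] unfolding layer_def by auto
  have "(w, l) \<in> (SIGMA w:layer (Suc j). UNIV - {inv_letter (last w)})"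
    using R lw unfolding layer_def by simp
  then show "v \<in> (\<lambda>(w, l). w @ [l]) ` (SIGMA w:layer (Suc j). UNIV - {inv_letter (last w)})"
    unfolding wl by (rule rev_image_eqI) simp
next
  fix v assume "v \<in> (\<lambda>(w, l). w @ [l]) ` (SIGMA w:layer (Suc j). UNIV - {inv_letter (last w)})"
  then obtain w l where "v = w @ [l]" "w \<in> layer (Suc j)" "l \<noteq> inv_letter (last w)" by auto
  then show "v \<in> layer (Suc (Suc j))" using reduced_snoc[of w l] by (auto simp: layer_def)
qed

lemma card_layer: "card (layer (Suc j) :: 'a::finite fword set) = 2 * CARD('a) * (2 * CARD('a) - 1) ^ j"
proof (induction j)
  case 0
  have "layer (Suc 0) = (\<lambda>l. [l]) ` (UNIV :: 'a letter set)"
    by (auto simp: layer_def reduced_def length_Suc_conv)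
  moreover have "card ((\<lambda>l. [l]) ` (UNIV :: 'a letter set)) = 2 * CARD('a)"
    by (subst card_image) (auto simp: inj_on_def card_UNIV_bool)
  ultimately show ?case by simp
next
  case (Suc j)
  have inj: "inj_on (\<lambda>(w, l). w @ [l]) ((SIGMA w:layer (Suc j). UNIV - {inv_letter (last w)}) :: ('a fword \<times> 'a letter) set)"
    by (auto simp: inj_on_def)
  have c: "card (UNIV - {z} :: 'a letter set) = 2 * CARD('a) - 1" for z
    by (simp add: card_UNIV_bool)
  have "card (layer (Suc (Suc j)) :: 'a fword set) = (\<Sum>w\<in>layer (Suc j). card (UNIV - {inv_letter (last w)} :: 'a letter set))"
    unfolding layer_Suc_Suc by (simp add: card_image[OF inj] finite_layer)
  also have "\<dots> = card (layer (Suc j) :: 'a fword set) * (2 * CARD('a) - 1)" by (simp add: c)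
  also have "\<dots> = 2 * CARD('a) * (2 * CARD('a) - 1) ^ j * (2 * CARD('a) - 1)" unfolding Suc.IH ..
  also have "\<dots> = 2 * CARD('a) * (2 * CARD('a) - 1) ^ Suc j" by (simp only: power_Suc2 mult.assoc)
  finally show ?case .
qed

lemma muS_layer: "muS (layer j :: 'a::finite fword set) = 1"
proof (cases j)
  case 0
  then have L: "layer j = {[]}" by (auto simp: layer_def reduced_def)
  show ?thesis unfolding muS_def L by (simp add: mu_def)
next
  case (Suc i)
  have A: "real CARD('a) \<ge> 1" by (simp add: Suc_leI)
  have "muS (layer j :: 'a fword set) = (\<Sum>w\<in>(layer j :: 'a fword set). 1 / (2 * real CARD('a) * (2 * real CARD('a) - 1) ^ i) :: real)"
    unfolding muS_def by (rule sum.cong[OF refl]) (auto simp: mu_def layer_def Suc)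
  also have "\<dots> = real (card (layer j :: 'a fword set)) / (2 * real CARD('a) * (2 * real CARD('a) - 1) ^ i)"
    by simp
  also have "real (card (layer j :: 'a fword set)) = 2 * real CARD('a) * (2 * real CARD('a) - 1) ^ i"
    using A unfolding Suc card_layer by (simp add: of_nat_diff)
  finally show ?thesis using A by simp
qed


lemma finite_upto_len: "finite (upto_len A n :: 'a::finite fword set)"
proof -
  have "upto_len A n \<subseteq> {xs. set xs \<subseteq> (UNIV :: 'a letter set) \<and> length xs \<le> n}"
    unfolding upto_len_def by auto
  then show ?thesis using finite_subset finite_lists_length_le[of "UNIV :: 'a letter set" n] by auto
qed

lemma muS_F: "muS (upto_len (free_group :: 'a::finite fword set) n) = real n + 1"
proof -
  have e: "upto_len (free_group :: 'a fword set) n = (\<Union>j\<in>{..n}. layer j)"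
    by (auto simp: upto_len_def free_group_def layer_def)
  have "muS (\<Union>j\<in>{..n}. layer j :: 'a fword set) = (\<Sum>j\<in>{..n}. muS (layer j :: 'a fword set))"
    unfolding muS_def by (rule sum.UNION_disjoint) (auto simp: finite_layer[unfolded layer_def] layer_def)
  also have "\<dots> = real n + 1" by (simp add: muS_layer)
  finally show ?thesis unfolding e .
qed

lemma muS_mono: "finite B \<Longrightarrow> A \<subseteq> B \<Longrightarrow> muS (A :: 'a::finite fword set) \<le> muS B"
  unfolding muS_def by (rule sum_mono2) (auto simp: mu_nonneg)

lemma muS_window:
  assumes "A \<subseteq> (free_group :: 'a::finite fword set)"
  shows "muS (upto_len A n) \<le> muS (upto_len A (n - m)) + real m"
proof -
  define B where "B = (\<Union>j\<in>{n-m<..n}. A \<inter> layer j)"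
  have e: "upto_len A n = upto_len A (n - m) \<union> B"
    unfolding B_def upto_len_def layer_def using assms by (auto simp: free_group_def)
  have d: "upto_len A (n - m) \<inter> B = {}"
    unfolding B_def upto_len_def by (auto simp: layer_def)
  have fB: "finite B" unfolding B_def by (auto intro: finite_subset[OF _ finite_layer])
  have "muS (upto_len A n) = muS (upto_len A (n - m)) + muS B"
    unfolding e muS_def by (rule sum.union_disjoint) (auto simp: finite_upto_len fB d)
  moreover have "muS B \<le> real m"
  proof -
    have "muS B = (\<Sum>j\<in>{n-m<..n}. muS (A \<inter> layer j))"
      unfolding B_def muS_def
      by (rule sum.UNION_disjoint) (auto intro: finite_subset[OF _ finite_layer] simp: layer_def)
    also have "\<dots> \<le> (\<Sum>j\<in>{n-m<..n}. 1)"
      by (rule sum_mono) (metis muS_layer muS_mono finite_layer inf_le2)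
    also have "\<dots> = real (n - (n - m))" by simp
    also have "\<dots> \<le> real m" by simp
    finally show ?thesis .
  qed
  ultimately show ?thesis by simp
qed

lemma Mconst_ge1: "Mconst TYPE('a::finite) \<ge> 1"
proof -
  have "real CARD('a) \<ge> 1" by (simp add: Suc_leI)
  then have "2 * real CARD('a) - 1 > 0" by linarith
  then show ?thesis unfolding Mconst_def by (simp add: le_divide_eq)
qed

fun Tset :: "'a fword set \<Rightarrow> 'a fword set \<Rightarrow> nat \<Rightarrow> 'a fword set" where
  "Tset W S 0 = S"
| "Tset W S (Suc i) = (\<lambda>(w, t). w @ t) ` (W \<times> Tset W S i)"

lemma fmul_H:
  assumes "x \<noteq> inv_letter y" "H \<subseteq> semG x y" "u \<in> H" "v \<in> H" "u \<noteq> []" "v \<noteq> []"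
  shows "fmul u v = u @ v"
proof -
  have "hd v = x" "last u = y" using assms unfolding semG_def by auto
  then show ?thesis using assms by (intro fmul_app) auto
qed

lemma Nil_notin_S:
  assumes "strongly_product_free k S" "k \<ge> 2"
  shows "[] \<notin> S"
proof
  assume "[] \<in> S"
  define xs :: "'a fword list" where "xs = [[], []]"
  then have "2 \<le> length xs \<and> length xs \<le> k \<and> set xs \<subseteq> S \<and> ([] :: 'a fword) \<in> S"
    using assms(2) \<open>[] \<in> S\<close> by simp
  then have "fprod xs \<noteq> []" using assms(1) unfolding strongly_product_free_def by blast
  then show False by (simp add: fprod_def fmul_def xs_def)
qed


context
  fixes x y :: "'a::finite letter" and H S W :: "'a fword set" and k :: nat
  assumes xy: "x \<noteq> inv_letter y" and HG: "H \<subseteq> semG x y" and sg: "subsemigroup H"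
    and k2: "k \<ge> 2" and SH: "S \<subseteq> H" and spf: "strongly_product_free k S"
    and WS: "W \<subseteq> S" and up: "unique_products W H"
begin

lemma S_ne: "[] \<notin> S" using Nil_notin_S[OF spf k2] .

lemma T_H: "Tset W S i \<subseteq> H \<and> [] \<notin> Tset W S i"
proof (induction i)
  case 0
  then show ?case using SH S_ne by simp
next
  case (Suc i)
  have "w @ t \<in> H" if "w \<in> W" "t \<in> Tset W S i" for w t
  proof -
    have "w \<in> H" "w \<noteq> []" using that WS SH S_ne by auto
    moreover have "t \<in> H" "t \<noteq> []" using that Suc by auto
    ultimately have "fmul w t = w @ t" using fmul_H[OF xy HG] by blast
    moreover have "fmul w t \<in> H" using sg \<open>w \<in> H\<close> \<open>t \<in> H\<close> unfolding subsemigroup_def by blast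
    ultimately show ?thesis by simp
  qed
  moreover have "[] \<notin> Tset W S (Suc i)" using Suc by auto
  ultimately show ?case by auto
qed

lemma T_app: "w \<in> W \<Longrightarrow> t \<in> Tset W S i \<Longrightarrow> fmul w t = w @ t"
  using T_H[of i] WS SH S_ne fmul_H[OF xy HG, of w t] by blast

lemma T_prod: "t \<in> Tset W S j \<Longrightarrow> \<exists>xs. length xs = Suc j \<and> set xs \<subseteq> S \<and> fprod xs = t"
proof (induction j arbitrary: t)
  case 0
  then show ?case by (intro exI[of _ "[t]"]) (simp add: fprod_def)
next
  case (Suc j)
  then obtain w t' where wt: "w \<in> W" "t' \<in> Tset W S j" "t = w @ t'" by auto
  then obtain xs where xs: "length xs = Suc j" "set xs \<subseteq> S" "fprod xs = t'" using Suc.IH by blast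
  have "fprod (w # xs) = fmul w t'" using xs by (simp add: fprod_def)
  also have "\<dots> = t" using T_app wt by simp
  finally show ?case using xs wt WS by (intro exI[of _ "w # xs"]) auto
qed

lemma T_cancel:
  assumes "w \<in> W" "w' \<in> W" "t \<in> Tset W S i" "t' \<in> Tset W S j" "w @ t = w' @ t'"
  shows "w = w' \<and> t = t'"
proof -
  have "fmul w t = fmul w' t'" using assms T_app by simp
  moreover have "t \<in> H" "t' \<in> H" using assms T_H by blast+
  ultimately show ?thesis using up assms(1,2) unfolding unique_products_def inj_on_def by auto
qed

lemma T_disj: "i < j \<Longrightarrow> j < k \<Longrightarrow> Tset W S i \<inter> Tset W S j = {}"
proof (induction i arbitrary: j)
  case 0
  show ?case
  proof (rule ccontr)
    assume "Tset W S 0 \<inter> Tset W S j \<noteq> {}"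
    then obtain t where t: "t \<in> S" "t \<in> Tset W S j" by auto
    then obtain xs where xs: "length xs = Suc j" "set xs \<subseteq> S" "fprod xs = t" using T_prod by blast
    then show False using spf 0 t unfolding strongly_product_free_def by auto
  qed
next
  case (Suc i)
  then obtain j' where j: "j = Suc j'" by (cases j) auto
  show ?case
  proof (rule ccontr)
    assume "Tset W S (Suc i) \<inter> Tset W S j \<noteq> {}"
    then obtain w t w' t' where "w \<in> W" "t \<in> Tset W S i" "w' \<in> W" "t' \<in> Tset W S j'" "w @ t = w' @ t'"
      unfolding j by auto
    then have "t = t'" using T_cancel by blast
    then have "Tset W S i \<inter> Tset W S j' \<noteq> {}" using \<open>t \<in> Tset W S i\<close> \<open>t' \<in> Tset W S j'\<close> by auto
    then show False using Suc.IH[of j'] Suc.prems j by simp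
  qed
qed

lemma T_measure:
  assumes fW: "finite W" and L: "\<forall>w\<in>W. length w \<le> L"
  shows "muS W / Mconst TYPE('a) * muS (upto_len (Tset W S i) (n - L))
           \<le> muS (upto_len (Tset W S (Suc i)) n)"
proof -
  define P where "P = W \<times> upto_len (Tset W S i) (n - L)"
  define f :: "'a fword \<times> 'a fword \<Rightarrow> 'a fword" where "f = (\<lambda>(w, t). w @ t)"
  define M where "M = Mconst TYPE('a)"
  have M1: "M \<ge> 1" unfolding M_def by (rule Mconst_ge1)
  have inj: "inj_on f P"
  proof (rule inj_onI)
    fix p q assume "p \<in> P" "q \<in> P" "f p = f q"
    then obtain w t w' t' where "p = (w, t)" "q = (w', t')" "w \<in> W" "w' \<in> W"
      "t \<in> Tset W S i" "t' \<in> Tset W S i" "w @ t = w' @ t'"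
      unfolding P_def f_def upto_len_def by auto
    then show "p = q" using T_cancel by blast
  qed
  have sub: "f ` P \<subseteq> upto_len (Tset W S (Suc i)) n"
  proof
    fix v assume "v \<in> f ` P"
    then obtain w t where wt: "w \<in> W" "t \<in> Tset W S i" "length t \<le> n - L" "v = w @ t"
      unfolding P_def f_def upto_len_def by auto
    have "t \<noteq> []" using wt T_H by blast
    then have "length t \<ge> 1" by (cases t) auto
    then have "length v \<le> n" using wt L by auto
    then show "v \<in> upto_len (Tset W S (Suc i)) n" using wt unfolding upto_len_def by auto
  qed
  have fP: "finite P" unfolding P_def using fW finite_upto_len by blast
  have "muS W / M * muS (upto_len (Tset W S i) (n - L))
      = (\<Sum>w\<in>W. \<Sum>t\<in>upto_len (Tset W S i) (n - L). mu w / M * mu t)"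
    unfolding muS_def by (simp add: sum_product sum_divide_distrib)
  also have "\<dots> = (\<Sum>(w, t)\<in>P. mu w / M * mu t)"
    unfolding P_def by (rule sum.cartesian_product)
  also have "\<dots> \<le> (\<Sum>p\<in>P. mu (f p))"
  proof (rule sum_mono)
    fix p assume "p \<in> P"
    then obtain w t where p: "p = (w, t)" "w \<in> W" "t \<in> Tset W S i" unfolding P_def upto_len_def by auto
    have "w \<noteq> []" "t \<noteq> []" using p WS S_ne T_H by blast+
    then have e: "mu (f p) = M * mu w * mu t" unfolding p f_def M_def by (simp add: mu_app)
    have nn: "mu w * mu t \<ge> 0" by (intro mult_nonneg_nonneg mu_nonneg)
    have pm: "mu w * mu t \<le> (mu w * mu t) * M" using mult_left_mono[OF M1 nn] by simp
    have "mu w / M * mu t = (mu w * mu t) / M" by simp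
    also have "\<dots> \<le> mu w * mu t" using M1 pm by (simp add: divide_le_eq)
    also have "\<dots> \<le> M * (mu w * mu t)" using pm by (simp add: mult.commute)
    finally show "(case p of (w, t) \<Rightarrow> mu w / M * mu t) \<le> mu (f p)" unfolding e unfolding p by (simp add: mult.assoc)
  qed
  also have "\<dots> = muS (f ` P)" unfolding muS_def by (simp add: sum.reindex[OF inj])
  also have "\<dots> \<le> muS (upto_len (Tset W S (Suc i)) n)" by (rule muS_mono[OF finite_upto_len sub])
  finally show ?thesis unfolding M_def .
qed

lemma T_iter:
  assumes fW: "finite W" and L: "\<forall>w\<in>W. length w \<le> L"
  shows "(muS W / Mconst TYPE('a)) ^ i * muS (upto_len S (n - i * L))
           \<le> muS (upto_len (Tset W S i) n)"
proof (induction i arbitrary: n)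
  case 0
  then show ?case by simp
next
  case (Suc i)
  define c where "c = muS W / Mconst TYPE('a)"
  have c0: "c \<ge> 0" unfolding c_def using Mconst_ge1[where 'a='a]
    by (intro divide_nonneg_nonneg) (auto simp: muS_def mu_nonneg intro: sum_nonneg)
  have e: "n - Suc i * L = (n - L) - i * L" by (simp add: diff_diff_left)
  have "c ^ Suc i * muS (upto_len S (n - Suc i * L)) = c * (c ^ i * muS (upto_len S ((n - L) - i * L)))"
    unfolding e by simp
  also have "\<dots> \<le> c * muS (upto_len (Tset W S i) (n - L))"
    using Suc.IH[of "n - L"] c0 unfolding c_def by (intro mult_left_mono) auto
  also have "\<dots> \<le> muS (upto_len (Tset W S (Suc i)) n)"
    unfolding c_def by (rule T_measure[OF fW L])
  finally show ?case unfolding c_def .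
qed

end


theorem lemma3p1:
  fixes x y :: "'a::finite letter"
    and H S W :: "'a fword set"
    and k :: nat
  assumes "CARD('a) \<ge> 2"
    and "x \<noteq> inv_letter y"
    and "H \<subseteq> semG x y" and "subsemigroup H" and "dense_set H"
    and "k \<ge> 2"
    and "S \<subseteq> H" and "strongly_product_free k S"
    and "W \<subseteq> S" and "finite W" and "unique_products W H"
  shows "upper_density H S \<le>
     ereal (1 / (\<Sum>i<k. (muS W / Mconst TYPE('a)) ^ i))"
proof -
  note xy = assms(2) and HG = assms(3) and sg = assms(4) and dn = assms(5) and k2 = assms(6)
    and SH = assms(7) and spf = assms(8) and WS = assms(9) and fW = assms(10) and up = assms(11)
  define L where "L = Max (insert 0 (length ` W))"
  have L: "\<forall>w\<in>W. length w \<le> L" unfolding L_def using fW by simp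
  define c where "c = muS W / Mconst TYPE('a)"
  have c0: "c \<ge> 0" unfolding c_def using Mconst_ge1[where 'a='a]
    by (intro divide_nonneg_nonneg) (auto simp: muS_def mu_nonneg intro: sum_nonneg)
  define C where "C = (\<Sum>i<k. c ^ i)"
  define D where "D = (\<Sum>i<k. c ^ i * real (i * L))"
  have C1: "C \<ge> 1"
  proof -
    have "(\<Sum>i\<in>{0}. c ^ i) \<le> (\<Sum>i<k. c ^ i)"
      using k2 c0 by (intro sum_mono2) auto
    then show ?thesis unfolding C_def by simp
  qed
  have D0: "D \<ge> 0" unfolding D_def using c0 by (intro sum_nonneg) simp
  define a where "a n = muS (upto_len S n)" for n
  define h where "h n = muS (upto_len H n)" for n
  have SF: "S \<subseteq> free_group" using SH HG unfolding semG_def free_group_def by auto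
  have key: "C * a n - D \<le> h n" for n
  proof -
    have disj: "Tset W S i \<inter> Tset W S j = {}" if "i < k" "j < k" "i \<noteq> j" for i j
    proof (cases "i < j")
      case True then show ?thesis using T_disj[OF xy HG sg k2 SH spf WS up] that by blast
    next
      case False then have "j < i" using that by simp
      then show ?thesis using T_disj[OF xy HG sg k2 SH spf WS up] that by blast
    qed
    have "C * a n - D = (\<Sum>i<k. c ^ i * (a n - real (i * L)))"
      unfolding C_def D_def by (simp add: sum_distrib_right sum_subtractf right_diff_distrib)
    also have "\<dots> \<le> (\<Sum>i<k. c ^ i * muS (upto_len S (n - i * L)))"
    proof (rule sum_mono)
      fix i
      have "a n \<le> muS (upto_len S (n - i * L)) + real (i * L)"
        unfolding a_def by (rule muS_window[OF SF])
      then show "c ^ i * (a n - real (i * L)) \<le> c ^ i * muS (upto_len S (n - i * L))"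
        using c0 by (intro mult_left_mono) auto
    qed
    also have "\<dots> \<le> (\<Sum>i<k. muS (upto_len (Tset W S i) n))"
      unfolding c_def by (rule sum_mono) (rule T_iter[OF xy HG sg k2 SH spf WS up fW L])
    also have "\<dots> = muS (\<Union>i<k. upto_len (Tset W S i) n)"
      unfolding muS_def
    proof (rule sum.UNION_disjoint[symmetric])
      show "\<forall>i\<in>{..<k}. \<forall>j\<in>{..<k}. i \<noteq> j \<longrightarrow> upto_len (Tset W S i) n \<inter> upto_len (Tset W S j) n = {}"
        using disj unfolding upto_len_def by blast
    qed (simp_all add: finite_upto_len)
    also have "\<dots> \<le> h n"
      unfolding h_def
      using T_H[OF xy HG sg k2 SH spf WS up]
      by (intro muS_mono finite_upto_len) (auto simp: upto_len_def)
    finally show ?thesis .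
  qed
  obtain \<delta> where d0: "\<delta> > 0" and ev0: "\<forall>\<^sub>F n in sequentially.
      muS (upto_len H n) > \<delta> * muS (upto_len (free_group :: 'a fword set) n) \<and>
      \<delta> * muS (upto_len (free_group :: 'a fword set) n) > 0"
    using dn unfolding dense_set_def by (elim exE conjE)
  have ev: "\<forall>\<^sub>F n in sequentially.
      muS (upto_len H n) > \<delta> * muS (upto_len (free_group :: 'a fword set) n)"
    using ev0 by (rule eventually_mono) (rule conjunct1)
  define g where "g n = 1 / C + D / (C * \<delta>) * inverse (real (Suc n))" for n
  have ev2: "\<forall>\<^sub>F n in sequentially. a n / h n \<le> g n"
    using ev
  proof (rule eventually_mono)
    fix n assume "muS (upto_len H n) > \<delta> * muS (upto_len (free_group :: 'a fword set) n)"
    then have hn: "h n > \<delta> * (real n + 1)" unfolding h_def muS_F .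
    have p: "\<delta> * (real n + 1) > 0" using d0 by simp
    then have hp: "h n > 0" using hn by linarith
    have "a n \<le> (h n + D) / C" using key[of n] C1 by (simp add: le_divide_eq algebra_simps)
    then have "a n / h n \<le> (h n + D) / C / h n" using hp by (intro divide_right_mono) auto
    also have "\<dots> = 1 / C + D / (C * h n)" using hp C1 by (simp add: field_simps)
    also have "D / (C * h n) \<le> D / (C * (\<delta> * (real n + 1)))"
      using D0 C1 p hn d0 hp by (intro divide_left_mono mult_left_mono mult_pos_pos) auto
    also have "D / (C * (\<delta> * (real n + 1))) = D / (C * \<delta>) * inverse (real (Suc n))"
      by (simp add: field_simps)
    finally show "a n / h n \<le> g n" unfolding g_def by simp
  qed
  have lim: "g \<longlonglongrightarrow> 1 / C"
  proof -
    have "(\<lambda>n. 1 / C + D / (C * \<delta>) * inverse (real (Suc n))) \<longlonglongrightarrow> 1 / C + D / (C * \<delta>) * 0"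
      by (intro tendsto_intros LIMSEQ_inverse_real_of_nat)
    then show ?thesis unfolding g_def by simp
  qed
  have "upper_density H S = limsup (\<lambda>n. ereal (a n / h n))"
    unfolding upper_density_def a_def h_def ..
  also have "\<dots> \<le> limsup (\<lambda>n. ereal (g n))"
    by (rule Limsup_mono) (use ev2 in \<open>auto elim: eventually_mono\<close>)
  also have "\<dots> = ereal (1 / C)"
    by (rule lim_imp_Limsup) (simp_all add: lim)
  finally show ?thesis unfolding C_def c_def .
qed

end
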